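(* Let $n\geq 2$ be an integer and let $f:\mathbb{R}\to\mathbb{R}$ be the continuous function which equals $1$ on $[\frac{1}{n},1-\frac{1}{n}]$, equals $-1$ on $[-1+\frac{1}{n},-\frac{1}{n}]$, equals $0$ for $|t|\geq 1$, and is linear on each of the intervals $[-1,-1+\frac{1}{n}]$, $[-\frac{1}{n},\frac{1}{n}]$ and $[1-\frac{1}{n},1]$. For a positive integer $k$ let $\phi_k(x)=c_k\left(1-\frac{x^2}{4}\right)^{k^2}$, where $c_k>0$ is chosen so that $\int_{-2}^2\phi_k(x)\,dx=1$, and let $P_k(t)=\int_{-1}^1 f(x)\phi_k(t-x)\,dx$ for $t\in\mathbb{R}$. Then: (i) $P_k$ is an odd polynomial of degree $2k^2-1$ with leading coefficient $$a_k=(-1)^{k^2+1}\frac{2c_k k^2}{4^{k^2}}\Big(1-\frac{1}{n}\Big),$$ i.e. $P_k(t)=a_k t^{2k^2-1}+(\text{lower order terms})$. (ii) There is an absolute constant $c>0$ (independent of $k$ and $n$) such that for all $t\in\mathbb{R}$, $$|P_k^{(2k^2-1)}(t)|\geq c\,(2k^2-1)!\,\frac{k^3}{4^{k^2}}.$$ (iii) For every $t\in[-1,1]$, $$P_k(t)=\int_0^2 \big(f(t+x)+f(t-x)\big)\phi_k(x)\,dx.$$ *)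

theory Defs
  imports "HOL-Analysis.Analysis" "HOL-Computational_Algebra.Polynomial"
begin

definition f_fun :: "nat \<Rightarrow> real \<Rightarrow> real" where
  "f_fun n t =
     (if \<bar>t\<bar> \<ge> 1 then 0
      else if t \<ge> 1 - 1 / real n then real n * (1 - t)
      else if t \<ge> 1 / real n then 1
      else if t \<ge> - 1 / real n then real n * t
      else if t \<ge> -1 + 1 / real n then -1
      else - real n * (1 + t))"

definition c_const :: "nat \<Rightarrow> real" where
  "c_const k = 1 / integral {-2..2} (\<lambda>x::real. (1 - x^2 / 4) ^ (k^2))"

definition phi :: "nat \<Rightarrow> real \<Rightarrow> real" where
  "phi k x = c_const k * (1 - x^2 / 4) ^ (k^2)"

definition P_fun :: "nat \<Rightarrow> nat \<Rightarrow> real \<Rightarrow> real" where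
  "P_fun n k t = integral {-1..1} (\<lambda>x. f_fun n x * phi k (t - x))"

definition a_coeff :: "nat \<Rightarrow> nat \<Rightarrow> real" where
  "a_coeff n k = (-1) ^ (k^2 + 1) * (2 * c_const k * real (k^2) / 4 ^ (k^2)) * (1 - 1 / real n)"

end

theory Submission imports Defs begin
definition gg :: "nat \<Rightarrow> real \<Rightarrow> real" where
  "gg n t = max 0 (min 1 (min (real n * t) (real n * (1 - t))))"

lemma f_gg:
  assumes "n \<ge> 2"
  shows "f_fun n t = gg n t - gg n (-t)"
proof -
  define N where "N = real n"
  have N: "N \<ge> 2" using assms by (simp add: N_def)
  define s where "s = N * t"
  have e1: "(1 \<le> \<bar>t\<bar>) = (N \<le> \<bar>s\<bar>)"
  proof -
    have "\<bar>s\<bar> = N * \<bar>t\<bar>" using N by (simp add: s_def abs_mult)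
    thus ?thesis using N by simp
  qed
  have e2: "(1 - 1 / N \<le> t) = (N - 1 \<le> s)" using N unfolding s_def by (simp add: field_simps)
  have e3: "(1 / N \<le> t) = (1 \<le> s)" using N unfolding s_def by (simp add: field_simps)
  have e4: "(- 1 / N \<le> t) = (- 1 \<le> s)" using N unfolding s_def by (simp add: field_simps)
  have e5: "(- 1 + 1 / N \<le> t) = (1 - N \<le> s)" using N unfolding s_def by (simp add: field_simps)
  have v: "N * (1 - t) = N - s" "N * t = s" "- N * (1 + t) = - N - s" "N * (-t) = - s"
     "N * (1 - - t) = N + s" unfolding s_def by (simp_all add: algebra_simps)
  show ?thesis
    unfolding f_fun_def gg_def N_def[symmetric] e1 e2 e3 e4 e5 v using N
    by (auto simp: abs_if max_def min_def split: if_splits)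
qed

lemma f_odd: "n \<ge> 2 \<Longrightarrow> f_fun n (-t) = - f_fun n t"
  by (simp add: f_gg)

lemma f_cont: "n \<ge> 2 \<Longrightarrow> continuous_on S (f_fun n)"
proof -
  assume "n \<ge> 2"
  hence "f_fun n = (\<lambda>t. gg n t - gg n (-t))" by (simp add: f_gg fun_eq_iff)
  moreover have "continuous_on S (\<lambda>t. gg n t - gg n (-t))"
    unfolding gg_def by (intro continuous_intros)
  ultimately show ?thesis by simp
qed

lemma f_zero: "\<bar>t\<bar> \<ge> 1 \<Longrightarrow> f_fun n t = 0"
  by (simp add: f_fun_def)

lemma phi_even: "phi k (-x) = phi k x"
  by (simp add: phi_def)

lemma phi_cont: "continuous_on S (phi k)"
  unfolding phi_def by (intro continuous_intros) auto

lemma f_pos: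
  assumes "n \<ge> 2" "0 \<le> x" "x \<le> 1"
  shows "f_fun n x = min 1 (min (real n * x) (real n - real n * x))"
proof -
  have a: "0 \<le> real n * x" using assms by simp
  have b: "real n * x \<le> real n" using assms by simp
  show ?thesis using a b unfolding f_gg[OF assms(1)] gg_def
    by (simp add: algebra_simps max_def min_def)
qed

lemma mh1: "(a::real) \<le> 1 \<Longrightarrow> a \<le> b \<Longrightarrow> min 1 (min a b) = a" by simp
lemma mh2: "(1::real) \<le> a \<Longrightarrow> 1 \<le> b \<Longrightarrow> min 1 (min a b) = 1" by simp
lemma mh3: "(b::real) \<le> 1 \<Longrightarrow> b \<le> a \<Longrightarrow> min 1 (min a b) = b" by simp

lemma ftc_on:
  fixes a b :: real
  assumes "a \<le> b" "\<And>x. x \<in> {a..b} \<Longrightarrow> g x = h x"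
    "\<And>x. (F has_real_derivative h x) (at x)"
  shows "(g has_integral (F b - F a)) {a..b}"
proof -
  have "(h has_integral (F b - F a)) {a..b}"
    using assms(1) assms(3)
    by (intro fundamental_theorem_of_calculus)
       (auto simp: has_real_derivative_iff_has_vector_derivative[symmetric]
             intro: has_field_derivative_at_within)
  thus ?thesis using has_integral_cong[of "{a..b}" g h] assms(2) by simp
qed

lemma f_int0: "n \<ge> 2 \<Longrightarrow> integral {-1..1} (f_fun n) = 0"
proof -
  assume n: "n \<ge> 2"
  have "integral {-1..1} (f_fun n) = integral {-1..1} (\<lambda>x. f_fun n (-x))"
    using Henstock_Kurzweil_Integration.integral_reflect_real[where a="-1" and b=1 and f="f_fun n"] by simp
  also have "\<dots> = - integral {-1..1} (f_fun n)" by (simp add: f_odd[OF n])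
  finally show ?thesis by simp
qed

lemma f_mom1:
  assumes n: "n \<ge> 2"
  shows "integral {-1..1} (\<lambda>x. f_fun n x * x) = 1 - 1 / real n"
proof -
  define N where "N = real n"
  have N: "N \<ge> 2" using n by (simp add: N_def)
  have le1: "0 \<le> 1 / N" "1 / N \<le> 1 - 1 / N" "1 - 1 / N \<le> 1" using N by (auto simp: field_simps)
  have p1: "((\<lambda>x. f_fun n x * x) has_integral ((\<lambda>x. N * x^3 / 3) (1/N) - (\<lambda>x. N * x^3 / 3) 0)) {0..1/N}"
  proof (rule ftc_on)
    show "\<And>x. x \<in> {0..1 / N} \<Longrightarrow> f_fun n x * x = N * x * x"
    proof -
      fix x assume x: "x \<in> {0..1/N}"
      have "N * x \<le> 1" "1 \<le> N - N * x" using x N by (auto simp: field_simps)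
      hence m: "min 1 (min (N*x) (N - N*x)) = N * x" by (intro mh1) auto
      have "f_fun n x = min 1 (min (N*x) (N - N*x))" by (rule f_pos[OF n, of x, folded N_def]) (use x le1 in \<open>simp only: atLeastAtMost_iff; linarith\<close>)+
      thus "f_fun n x * x = N * x * x" using m by simp
    qed
    show "\<And>x. ((\<lambda>x. N * x ^ 3 / 3) has_real_derivative N * x * x) (at x)"
      by (auto intro!: derivative_eq_intros simp: power2_eq_square)
  qed (use le1 in auto)
  have p2: "((\<lambda>x. f_fun n x * x) has_integral ((\<lambda>x. x^2 / 2) (1 - 1/N) - (\<lambda>x. x^2/2) (1/N))) {1/N..1-1/N}"
  proof (rule ftc_on)
    show "\<And>x. x \<in> {1/N..1-1/N} \<Longrightarrow> f_fun n x * x = x"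
    proof -
      fix x assume x: "x \<in> {1/N..1-1/N}"
      have "N * x \<ge> 1" "1 \<le> N - N * x" using x N by (auto simp: field_simps)
      hence m: "min 1 (min (N*x) (N - N*x)) = 1" by (intro mh2) auto
      have "f_fun n x = min 1 (min (N*x) (N - N*x))" by (rule f_pos[OF n, of x, folded N_def]) (use x le1 in \<open>simp only: atLeastAtMost_iff; linarith\<close>)+
      thus "f_fun n x * x = x" using m by simp
    qed
    show "\<And>x. ((\<lambda>x. x^2 / 2) has_real_derivative x) (at x)"
      by (auto intro!: derivative_eq_intros)
  qed (use le1 in auto)
  have p3: "((\<lambda>x. f_fun n x * x) has_integral ((\<lambda>x. N * (x^2/2 - x^3/3)) 1 - (\<lambda>x. N * (x^2/2 - x^3/3)) (1-1/N))) {1-1/N..1}"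
  proof (rule ftc_on)
    show "\<And>x. x \<in> {1-1/N..1} \<Longrightarrow> f_fun n x * x = (N - N * x) * x"
    proof -
      fix x assume x: "x \<in> {1-1/N..1}"
      have "N - N * x \<le> 1" "1 \<le> N * x" using x N by (auto simp: field_simps)
      hence m: "min 1 (min (N*x) (N - N*x)) = N - N * x" by (intro mh3) auto
      have "f_fun n x = min 1 (min (N*x) (N - N*x))" by (rule f_pos[OF n, of x, folded N_def]) (use x le1 in \<open>simp only: atLeastAtMost_iff; linarith\<close>)+
      thus "f_fun n x * x = (N - N * x) * x" using m by simp
    qed
    show "\<And>x. ((\<lambda>x. N * (x^2/2 - x^3/3)) has_real_derivative (N - N * x) * x) (at x)"
      by (auto intro!: derivative_eq_intros simp: power2_eq_square algebra_simps)
  qed (use le1 in auto)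
  have "((\<lambda>x. f_fun n x * x) has_integral (1/2 - 1/(2*N))) {0..1}"
  proof -
    have "((\<lambda>x. f_fun n x * x) has_integral
      (((\<lambda>x. N * x^3 / 3) (1/N) - (\<lambda>x. N * x^3 / 3) 0) + ((\<lambda>x. x^2 / 2) (1 - 1/N) - (\<lambda>x. x^2/2) (1/N))
       + ((\<lambda>x. N * (x^2/2 - x^3/3)) 1 - (\<lambda>x. N * (x^2/2 - x^3/3)) (1-1/N)))) {0..1}"
      by (intro has_integral_combine[OF _ _ has_integral_combine[OF _ _ p1 p2] p3]) (use le1 in auto)
    moreover have "(((\<lambda>x. N * x^3 / 3) (1/N) - (\<lambda>x. N * x^3 / 3) 0) + ((\<lambda>x. x^2 / 2) (1 - 1/N) - (\<lambda>x. x^2/2) (1/N))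
       + ((\<lambda>x. N * (x^2/2 - x^3/3)) 1 - (\<lambda>x. N * (x^2/2 - x^3/3)) (1-1/N))) = 1/2 - 1/(2*N)"
      using N by (simp add: field_simps power3_eq_cube power2_eq_square)
    ultimately show ?thesis by simp
  qed
  hence I01: "integral {0..1} (\<lambda>x. f_fun n x * x) = 1/2 - 1/(2*N)" by (rule integral_unique)
  have "integral {-1..0} (\<lambda>x. f_fun n x * x) = integral {- 1..- 0} (\<lambda>x. f_fun n (-x) * (-x))"
    by (simp add: f_odd[OF n])
  also have "\<dots> = integral {0..1} (\<lambda>x. f_fun n x * x)"
    by (rule Henstock_Kurzweil_Integration.integral_reflect_real)
  finally have I10: "integral {-1..0} (\<lambda>x. f_fun n x * x) = 1/2 - 1/(2*N)" using I01 by simp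
  have int: "(\<lambda>x. f_fun n x * x) integrable_on {-1..1}"
    by (intro integrable_continuous_interval continuous_intros f_cont n)
  have "integral {-1..1} (\<lambda>x. f_fun n x * x) = integral {-1..0} (\<lambda>x. f_fun n x * x) + integral {0..1} (\<lambda>x. f_fun n x * x)"
    using Henstock_Kurzweil_Integration.integral_combine[OF _ _ int, of 0] by simp
  thus ?thesis using I01 I10 N by (simp add: N_def field_simps)
qed


lemma P_odd:
  assumes n: "n \<ge> 2"
  shows "P_fun n k (-t) = - P_fun n k t"
proof -
  have "P_fun n k (-t) = integral {-1..1} (\<lambda>x. f_fun n (-x) * phi k (-t - (-x)))"
    unfolding P_fun_def using Henstock_Kurzweil_Integration.integral_reflect_real[where a="-1" and b=1 and f="\<lambda>x. f_fun n x * phi k (-t - x)"] by simp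
  also have "\<dots> = integral {-1..1} (\<lambda>x. - (f_fun n x * phi k (t - x)))"
  proof -
    have "\<And>x. phi k (-t - (-x)) = phi k (t - x)"
      using phi_even[of k "t - x" for x] by (simp add: algebra_simps)
    thus ?thesis by (simp add: f_odd[OF n])
  qed
  also have "\<dots> = - P_fun n k t" unfolding P_fun_def by simp
  finally show ?thesis .
qed

lemma part3:
  assumes n: "n \<ge> 2" and t: "t \<in> {-1..1}"
  shows "P_fun n k t = integral {0..2} (\<lambda>x. (f_fun n (t + x) + f_fun n (t - x)) * phi k x)"
proof -
  define h where "h = (\<lambda>x. f_fun n x * phi k (t - x))"
  have hc: "continuous_on S h" for S unfolding h_def
    by (intro continuous_intros f_cont[OF n] continuous_on_compose2[OF phi_cont[of UNIV k]]) auto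
  have hint: "h integrable_on {a..b}" for a b by (rule integrable_continuous_interval[OF hc])
  have z1: "integral {t-2..-1} h = 0"
  proof -
    have "integral {t-2..-1} h = integral {t-2..-1} (\<lambda>x. 0)"
      by (rule integral_cong) (auto simp: h_def f_zero)
    thus ?thesis by simp
  qed
  have z2: "integral {1..t+2} h = 0"
  proof -
    have "integral {1..t+2} h = integral {1..t+2} (\<lambda>x. 0)"
      by (rule integral_cong) (auto simp: h_def f_zero)
    thus ?thesis by simp
  qed
  have "integral {t-2..t+2} h = integral {t-2..-1} h + integral {-1..t+2} h"
    using Henstock_Kurzweil_Integration.integral_combine[OF _ _ hint, of "t-2" "-1" "t+2"] t by simp
  also have "integral {-1..t+2} h = integral {-1..1} h + integral {1..t+2} h"
    using Henstock_Kurzweil_Integration.integral_combine[OF _ _ hint, of "-1" 1 "t+2"] t by simp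
  finally have e1: "integral {t-2..t+2} h = P_fun n k t" using z1 z2 by (simp add: P_fun_def h_def)
  have "integral {t-2..t+2} h = integral {(t-2)-t..(t+2)-t} (\<lambda>x. h (x + t))"
    by (rule integral_shift_real_ivl[symmetric])
  also have "\<dots> = integral {-2..2} (\<lambda>x. f_fun n (t + x) * phi k x)"
  proof -
    have "\<And>x. h (x + t) = f_fun n (t + x) * phi k x"
      unfolding h_def using phi_even[of k] by (simp add: add.commute)
    thus ?thesis by simp
  qed
  finally have e2: "P_fun n k t = integral {-2..2} (\<lambda>x. f_fun n (t + x) * phi k x)" using e1 by simp
  define u where "u = (\<lambda>x. f_fun n (t + x) * phi k x)"
  have uc: "continuous_on S u" for S unfolding u_def
    by (intro continuous_intros continuous_on_compose2[OF f_cont[OF n, of UNIV]] phi_cont) auto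
  have uint: "u integrable_on {a..b}" for a b by (rule integrable_continuous_interval[OF uc])
  have "integral {-2..2} u = integral {-2..0} u + integral {0..2} u"
    using Henstock_Kurzweil_Integration.integral_combine[OF _ _ uint, of "-2" 0 2] by simp
  also have "integral {-2..0} u = integral {- 2..- 0} (\<lambda>x. (\<lambda>y. u (-y)) (-x))" by simp
  also have "\<dots> = integral {0..2} (\<lambda>y. u (-y))" by (rule Henstock_Kurzweil_Integration.integral_reflect_real)
  also have "integral {0..2} (\<lambda>y. u (-y)) + integral {0..2} u
      = integral {0..2} (\<lambda>x. u (-x) + u x)"
  proof (rule integral_add[symmetric])
    show "(\<lambda>y. u (-y)) integrable_on {0..2}"
      by (intro integrable_continuous_interval continuous_on_compose2[OF uc[of UNIV]] continuous_intros) auto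
  qed (rule uint)
  also have "\<dots> = integral {0..2} (\<lambda>x. (f_fun n (t + x) + f_fun n (t - x)) * phi k x)"
    unfolding u_def by (rule integral_cong) (simp add: phi_even algebra_simps)
  finally show ?thesis using e2 by (simp add: u_def)
qed


lemma onep_ne [simp]: "1 + (y::real)^2 \<noteq> 0" by (smt (verit) zero_le_power2)

lemma sq_le: "\<bar>x::real\<bar> \<le> a \<Longrightarrow> x^2 \<le> a^2"
  by (metis abs_ge_zero abs_le_square_iff order_trans power2_abs power_mono)

lemma Ipos: "integral {-2..2} (\<lambda>x::real. (1 - x^2/4)^(k^2)) > 0"
proof -
  let ?g = "\<lambda>x::real. (1 - x^2/4)^(k^2)"
  have gc: "continuous_on S ?g" for S by (intro continuous_intros) auto
  have "integral {-1..1} (\<lambda>x::real. (3/4::real)^(k^2)) \<le> integral {-1..1} ?g"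
  proof (rule Henstock_Kurzweil_Integration.integral_le)
    fix x :: real assume "x \<in> {-1..1}"
    hence "x^2 \<le> 1^2" by (intro sq_le) auto
    thus "(3/4::real)^(k^2) \<le> ?g x" by (intro power_mono) auto
  qed (auto intro: integrable_continuous_interval gc)
  also have "\<dots> \<le> integral {-2..2} ?g"
  proof (rule integral_subset_le)
    show "\<forall>x\<in>{-2..2}. 0 \<le> ?g x"
    proof
      fix x :: real assume "x \<in> {-2..2}"
      hence "x^2 \<le> 2^2" by (intro sq_le) auto
      thus "0 \<le> ?g x" by (intro zero_le_power) auto
    qed
  qed (auto intro: integrable_continuous_interval gc)
  finally have "integral {-1..1} (\<lambda>x::real. (3/4::real)^(k^2)) \<le> integral {-2..2} ?g" .
  moreover have "integral {-1..1} (\<lambda>x::real. (3/4::real)^(k^2)) = 2 * (3/4)^(k^2)" by simp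
  moreover have "(0::real) < 2 * (3/4)^(k^2)" by simp
  ultimately show ?thesis by linarith
qed

lemma pt_bound:
  fixes x :: real
  assumes "x \<in> {-2..2}"
  shows "(1 - x^2/4)^(k^2) \<le> 1 / (1 + (real k * x / 2)^2)"
proof -
  define u where "u = x^2/4"
  have "x^2 \<le> 2^2" using assms by (intro sq_le) auto
  hence u: "0 \<le> u" "u \<le> 1" by (auto simp: u_def)
  have ku: "(real k * x / 2)^2 = real (k^2) * u" by (simp add: u_def power_mult_distrib power_divide)
  have b: "1 + real (k^2) * u \<le> (1 + u)^(k^2)" using Bernoulli_inequality[of u "k^2"] u by simp
  have "(1 - u)^(k^2) * (1 + real (k^2) * u) \<le> (1 - u)^(k^2) * (1 + u)^(k^2)"
    by (rule mult_left_mono[OF b]) (use u in simp)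
  also have "\<dots> = (1 - u^2)^(k^2)" by (simp add: power_mult_distrib[symmetric] power2_eq_square algebra_simps)
  also have "\<dots> \<le> 1" using u by (intro power_le_one) (auto simp: power2_eq_square mult_le_one)
  finally have "(1 - u)^(k^2) * (1 + real (k^2) * u) \<le> 1" .
  moreover have "0 < 1 + real (k^2) * u" using u by (simp add: add_pos_nonneg)
  ultimately show ?thesis unfolding ku by (simp add: u_def le_divide_eq)
qed

lemma Ibound:
  assumes k: "k \<ge> 1"
  shows "integral {-2..2} (\<lambda>x::real. (1 - x^2/4)^(k^2)) \<le> 2 * pi / real k"
proof -
  let ?g = "\<lambda>x::real. (1 - x^2/4)^(k^2)"
  let ?h = "\<lambda>x::real. 1 / (1 + (real k * x / 2)^2)"
  let ?F = "\<lambda>x::real. 2 / real k * arctan (real k * x / 2)"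
  have kpos: "real k > 0" using k by simp
  have hI: "(?h has_integral (?F 2 - ?F (-2))) {-2..2}"
  proof (rule ftc_on)
    fix x :: real
    have d: "(arctan has_real_derivative inverse (1 + (real k * x / 2)^2)) (at (real k * x / 2))"
      by (rule DERIV_arctan)
    have "((\<lambda>x. arctan (real k * x / 2)) has_real_derivative inverse (1 + (real k * x / 2)^2) * (real k / 2)) (at x)"
      by (rule DERIV_chain2[where f=arctan and g="\<lambda>x. real k * x / 2", OF d]) (auto intro!: derivative_eq_intros)
    hence D: "(?F has_real_derivative 2 / real k * (inverse (1 + (real k * x / 2)^2) * (real k / 2))) (at x)"
      by (rule DERIV_cmult)
    have E: "2 / real k * (inverse (1 + (real k * x / 2)^2) * (real k / 2)) = ?h x"
      using kpos by (simp add: field_simps)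
    show "(?F has_real_derivative ?h x) (at x)" using D by (simp only: E)
  qed auto
  have "integral {-2..2} ?g \<le> integral {-2..2} ?h"
    by (rule Henstock_Kurzweil_Integration.integral_le) (auto intro!: integrable_continuous_interval continuous_intros pt_bound
         simp: add_pos_nonneg)
  also have "\<dots> = ?F 2 - ?F (-2)" using hI by (rule integral_unique)
  also have "\<dots> = 2 / real k * (arctan (real k) - arctan (- real k))" using kpos by (simp add: algebra_simps)
  also have "\<dots> \<le> 2 / real k * pi"
  proof (rule mult_left_mono)
    show "arctan (real k) - arctan (- real k) \<le> pi"
      using arctan_ubound[of "real k"] arctan_lbound[of "- real k"] by simp
  qed (use kpos in simp)
  finally show ?thesis by simp
qed

lemma c_pos: "c_const k > 0"
  using Ipos[of k] by (simp add: c_const_def)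

lemma c_bound: "k \<ge> 1 \<Longrightarrow> c_const k \<ge> real k / (2 * pi)"
proof -
  assume k: "k \<ge> 1"
  let ?I = "integral {-2..2} (\<lambda>x::real. (1 - x^2/4)^(k^2))"
  have "real k / (2 * pi) = 1 / (2 * pi / real k)" using k by simp
  also have "\<dots> \<le> 1 / ?I" using Ipos[of k] Ibound[OF k] k by (intro divide_left_mono) (auto intro!: divide_pos_pos mult_pos_pos)
  finally show ?thesis by (simp add: c_const_def)
qed


lemma P_poly:
  assumes n: "n \<ge> 2" and k: "k \<ge> 1"
  shows "\<exists>p. (\<forall>t. poly p t = P_fun n k t) \<and> degree p = 2*k^2 - 1 \<and> lead_coeff p = a_coeff n k"
proof -
  define K where "K = k^2"
  have K1: "K \<ge> 1" using k by (simp add: K_def)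
  define r :: "real poly" where "r = [:1, 0, -(1/4):]"
  define Q :: "real poly" where "Q = smult (c_const k) (r ^ K)"
  have polyr: "poly r y = 1 - y^2/4" for y by (simp add: r_def power2_eq_square)
  have polyQ: "poly Q y = phi k y" for y by (simp add: Q_def phi_def K_def polyr)
  have degr: "degree r = 2" by (simp add: r_def)
  have degQ: "degree Q \<le> 2*K"
  proof -
    have "degree Q \<le> degree (r ^ K)" unfolding Q_def by (rule degree_smult_le)
    also have "\<dots> \<le> degree r * K" by (rule degree_power_le)
    finally show ?thesis using degr by simp
  qed
  have cQ: "coeff Q (2*K) = c_const k * (-(1/4))^K"
  proof -
    have r0: "r \<noteq> 0" using degr by auto
    have dK: "degree (r^K) = 2*K" using degree_power_eq[OF r0, of K] degr by simp
    have "lead_coeff r = -(1/4)" by (simp add: r_def)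
    hence "coeff (r^K) (2*K) = (-(1/4))^K" using lead_coeff_power[of r K] dK by simp
    thus ?thesis by (simp add: Q_def)
  qed
  have phiexp: "phi k y = (\<Sum>m\<le>2*K. coeff Q m * y^m)" for y
    using arg_cong[OF poly_as_sum_of_monoms'[OF degQ], of "\<lambda>q. poly q y"] polyQ
    by (simp add: poly_sum poly_monom)
  define mu where "mu r = integral {-1..1} (\<lambda>x. f_fun n x * (-x)^r)" for r
  have fint: "(\<lambda>x. c * (f_fun n x * (-x)^r)) integrable_on {-1..1}" for c r
    by (intro integrable_continuous_interval continuous_intros f_cont n)
  have mu0: "mu 0 = 0" using f_int0[OF n] by (simp add: mu_def)
  have mu1: "mu 1 = -(1 - 1/real n)" using f_mom1[OF n] by (simp add: mu_def)
  define p where "p = (\<Sum>m\<le>2*K. \<Sum>j\<le>m. monom (coeff Q m * of_nat (m choose j) * mu (m - j)) j)"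
  have polyp: "poly p t = P_fun n k t" for t
  proof -
    have "P_fun n k t = integral {-1..1} (\<lambda>x. \<Sum>m\<le>2*K. \<Sum>j\<le>m.
        (coeff Q m * of_nat (m choose j) * t^j) * (f_fun n x * (-x)^(m-j)))"
      unfolding P_fun_def
    proof (rule integral_cong)
      fix x
      have "phi k (t - x) = (\<Sum>m\<le>2*K. coeff Q m * (t + -x)^m)" using phiexp[of "t-x"] by simp
      also have "\<dots> = (\<Sum>m\<le>2*K. coeff Q m * (\<Sum>j\<le>m. of_nat (m choose j) * t^j * (-x)^(m-j)))"
        by (simp only: binomial_ring)
      finally show "f_fun n x * phi k (t - x) = (\<Sum>m\<le>2*K. \<Sum>j\<le>m.
        (coeff Q m * of_nat (m choose j) * t^j) * (f_fun n x * (-x)^(m-j)))"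
        by (simp add: sum_distrib_left mult_ac)
    qed
    also have "\<dots> = (\<Sum>m\<le>2*K. integral {-1..1} (\<lambda>x. \<Sum>j\<le>m.
        (coeff Q m * of_nat (m choose j) * t^j) * (f_fun n x * (-x)^(m-j))))"
      by (rule integral_sum) (auto intro!: integrable_sum fint)
    also have "\<dots> = (\<Sum>m\<le>2*K. \<Sum>j\<le>m. (coeff Q m * of_nat (m choose j) * t^j) * mu (m - j))"
    proof (rule sum.cong[OF refl])
      fix m
      show "integral {-1..1} (\<lambda>x. \<Sum>j\<le>m.
        (coeff Q m * of_nat (m choose j) * t^j) * (f_fun n x * (-x)^(m-j)))
        = (\<Sum>j\<le>m. (coeff Q m * of_nat (m choose j) * t^j) * mu (m - j))"
        by (subst integral_sum) (auto intro!: fint simp: mu_def)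
    qed
    also have "\<dots> = poly p t" by (simp add: p_def poly_sum poly_monom mult_ac)
    finally show ?thesis by simp
  qed
  have coeffp: "coeff p i = (\<Sum>m\<le>2*K. if i \<le> m then coeff Q m * of_nat (m choose i) * mu (m - i) else 0)" for i
    by (simp add: p_def coeff_sum coeff_monom)
  have deg_le: "degree p \<le> 2*K - 1"
  proof (rule degree_le, intro allI impI)
    fix i assume i: "2*K - 1 < i"
    show "coeff p i = 0" unfolding coeffp
    proof (rule sum.neutral, intro ballI)
      fix m assume "m \<in> {..2*K}"
      thus "(if i \<le> m then coeff Q m * of_nat (m choose i) * mu (m - i) else 0) = 0"
        using i mu0 by (cases "i \<le> m") auto
    qed
  qed
  have cp: "coeff p (2*K-1) = coeff Q (2*K) * of_nat (2*K) * mu 1"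
  proof -
    have "coeff p (2*K-1) = (\<Sum>m\<le>2*K. if m = 2*K then coeff Q (2*K) * of_nat (2*K) * mu 1 else 0)"
      unfolding coeffp
    proof (rule sum.cong[OF refl])
      fix m assume m: "m \<in> {..2*K}"
      show "(if 2*K-1 \<le> m then coeff Q m * of_nat (m choose (2*K-1)) * mu (m - (2*K-1)) else 0)
         = (if m = 2*K then coeff Q (2*K) * of_nat (2*K) * mu 1 else 0)"
      proof (cases "m = 2*K")
        case True
        have "Suc (2*K-1) = 2*K" using K1 by simp
        hence "(2*K choose (2*K-1)) = 2*K" using binomial_Suc_n[of "2*K-1"] by simp
        moreover have "2*K - (2*K-1) = 1" using K1 by simp
        ultimately show ?thesis using True by simp
      next
        case False
        show ?thesis using False m mu0 by (cases "m = 2*K-1") auto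
      qed
    qed
    also have "\<dots> = coeff Q (2*K) * of_nat (2*K) * mu 1" by simp
    finally show ?thesis .
  qed
  have val: "coeff p (2*K-1) = a_coeff n k"
  proof -
    have e: "(-(1/4::real))^K = (-1)^K / 4^K" by (simp add: power_minus' power_divide)
    show ?thesis using n unfolding cp cQ mu1 a_coeff_def K_def[symmetric] e by simp (simp add: field_simps)
  qed
  have ne: "a_coeff n k \<noteq> 0"
    using c_pos[of k] n K1 unfolding a_coeff_def K_def[symmetric] by simp
  have degp: "degree p = 2*K - 1"
    using deg_le le_degree[of p "2*K-1"] val ne by simp
  have "(\<forall>t. poly p t = P_fun n k t) \<and> degree p = 2*k^2 - 1 \<and> lead_coeff p = a_coeff n k"
    using polyp degp val by (simp add: K_def)
  thus ?thesis by blast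
qed

lemma deriv_poly: "deriv (poly q) = poly (pderiv q)"
  by (rule ext, rule DERIV_imp_deriv, rule poly_DERIV)

lemma deriv_poly_iter: "(deriv ^^ m) (poly q) = poly ((pderiv ^^ m) q)"
  by (induct m) (simp_all add: deriv_poly)

lemma higher_top:
  assumes "degree p = D"
  shows "(pderiv ^^ D) p = [:fact D * lead_coeff p:]"
proof (rule poly_eqI)
  fix i
  show "coeff ((pderiv ^^ D) p) i = coeff [:fact D * lead_coeff p:] i"
  proof (cases i)
    case 0 thus ?thesis using assms by (simp add: coeff_higher_pderiv pochhammer_fact)
  next
    case (Suc j) thus ?thesis using assms by (simp add: coeff_higher_pderiv coeff_eq_0)
  qed
qed

theorem lemma2:
  shows "(\<forall>n k. n \<ge> 2 \<and> k \<ge> 1 \<longrightarrow>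
            (\<exists>p :: real poly. (\<forall>t. poly p t = P_fun n k t)
               \<and> (\<forall>t. poly p (-t) = - poly p t)
               \<and> degree p = 2 * k^2 - 1
               \<and> lead_coeff p = a_coeff n k))
       \<and> (\<exists>c > (0::real). \<forall>n k t. n \<ge> 2 \<and> k \<ge> 1 \<longrightarrow>
            \<bar>(deriv ^^ (2 * k^2 - 1)) (P_fun n k) t\<bar>
              \<ge> c * fact (2 * k^2 - 1) * real k ^ 3 / 4 ^ (k^2))
       \<and> (\<forall>n k t. n \<ge> 2 \<and> k \<ge> 1 \<and> t \<in> {-1..1} \<longrightarrow>
            P_fun n k t = integral {0..2} (\<lambda>x. (f_fun n (t + x) + f_fun n (t - x)) * phi k x))"
proof (intro conjI)
  show "\<forall>n k. n \<ge> 2 \<and> k \<ge> 1 \<longrightarrow>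
            (\<exists>p :: real poly. (\<forall>t. poly p t = P_fun n k t)
               \<and> (\<forall>t. poly p (-t) = - poly p t)
               \<and> degree p = 2 * k^2 - 1
               \<and> lead_coeff p = a_coeff n k)"
  proof (intro allI impI)
    fix n k :: nat assume a: "n \<ge> 2 \<and> k \<ge> 1"
    then obtain p where p: "\<forall>t. poly p t = P_fun n k t" "degree p = 2*k^2 - 1" "lead_coeff p = a_coeff n k"
      using P_poly by blast
    have "\<forall>t. poly p (-t) = - poly p t" using p(1) P_odd a by simp
    thus "\<exists>p :: real poly. (\<forall>t. poly p t = P_fun n k t)
               \<and> (\<forall>t. poly p (-t) = - poly p t)
               \<and> degree p = 2 * k^2 - 1
               \<and> lead_coeff p = a_coeff n k" using p by blast
  qed
next
  show "\<exists>c > (0::real). \<forall>n k t. n \<ge> 2 \<and> k \<ge> 1 \<longrightarrow>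
            \<bar>(deriv ^^ (2 * k^2 - 1)) (P_fun n k) t\<bar>
              \<ge> c * fact (2 * k^2 - 1) * real k ^ 3 / 4 ^ (k^2)"
  proof (intro exI[of _ "1 / (2 * pi)"] conjI allI impI)
    show "(0::real) < 1 / (2 * pi)" by simp
    fix n k :: nat and t :: real assume a: "n \<ge> 2 \<and> k \<ge> 1"
    define D where "D = 2 * k^2 - 1"
    obtain p where p: "\<forall>t. poly p t = P_fun n k t" "degree p = D" "lead_coeff p = a_coeff n k"
      using P_poly a unfolding D_def by blast
    have Pe: "P_fun n k = poly p" using p(1) by auto
    have dv: "(deriv ^^ D) (P_fun n k) t = fact D * a_coeff n k"
      unfolding Pe deriv_poly_iter higher_top[OF p(2)] using p(3) by simp
    have c: "c_const k \<ge> real k / (2 * pi)" using c_bound a by simp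
    have cp: "c_const k > 0" by (rule c_pos)
    have nn: "1 - 1 / real n \<ge> 1/2" using a by (simp add: field_simps)
    have abs_a: "\<bar>a_coeff n k\<bar> = 2 * c_const k * real (k^2) / 4^(k^2) * (1 - 1 / real n)"
      using cp nn unfolding a_coeff_def by (simp add: abs_mult)
    have "real k / (2 * pi) * real (k^2) / 4^(k^2) \<le> c_const k * real (k^2) / 4^(k^2)"
      using c by (intro divide_right_mono mult_right_mono) auto
    also have "\<dots> \<le> 2 * c_const k * real (k^2) / 4^(k^2) * (1 - 1 / real n)"
    proof -
      have "0 \<le> c_const k * real (k^2) / 4^(k^2)" using cp by simp
      hence "c_const k * real (k^2) / 4^(k^2) * 1 \<le> c_const k * real (k^2) / 4^(k^2) * (2 * (1 - 1 / real n))"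
        using nn by (intro mult_left_mono) auto
      thus ?thesis by (simp add: algebra_simps)
    qed
    finally have b: "real k / (2 * pi) * real (k^2) / 4^(k^2) \<le> \<bar>a_coeff n k\<bar>" using abs_a by simp
    have "1 / (2 * pi) * fact D * real k ^ 3 / 4 ^ (k^2) = fact D * (real k / (2 * pi) * real (k^2) / 4^(k^2))"
      by (simp add: power3_eq_cube power2_eq_square)
    also have "\<dots> \<le> fact D * \<bar>a_coeff n k\<bar>" by (intro mult_left_mono b) auto
    also have "\<dots> = \<bar>(deriv ^^ D) (P_fun n k) t\<bar>" unfolding dv by (simp add: abs_mult)
    finally show "1 / (2 * pi) * fact (2 * k^2 - 1) * real k ^ 3 / 4 ^ (k^2)
        \<le> \<bar>(deriv ^^ (2 * k^2 - 1)) (P_fun n k) t\<bar>" unfolding D_def .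
  qed
next
  show "\<forall>n k t. n \<ge> 2 \<and> k \<ge> 1 \<and> t \<in> {-1..1} \<longrightarrow>
            P_fun n k t = integral {0..2} (\<lambda>x. (f_fun n (t + x) + f_fun n (t - x)) * phi k x)"
    using part3 by blast
qed

end
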